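(* Let $n\ge 2$, let $d$ be a positive even integer, and let $f$ be a form (homogeneous polynomial with real coefficients) of degree $d$ in $n$ variables. The following statements are equivalent: (i) $f$ is nonnegative on $\mathbb{R}^n$ and the function $x\mapsto f(x)^{1/d}$ is a norm on $\mathbb{R}^n$; (ii) $f$ is convex and positive definite, i.e. $f(x)>0$ for all $x\neq 0$; (iii) $f$ is strictly convex, i.e. $f(\lambda x+(1-\lambda)y)<\lambda f(x)+(1-\lambda)f(y)$ for all $x\neq y$ in $\mathbb{R}^n$ and all $\lambda\in(0,1)$.
   Context: A norm on $\mathbb{R}^n$ is a function $g:\mathbb{R}^n\to\mathbb{R}$ with $g(x)>0$ for $x\neq0$, $g(0)=0$, $g(\lambda x)=|\lambda|g(x)$ for all $\lambda\in\mathbb{R}$, $x\in\mathbb{R}^n$, and $g(x+y)\le g(x)+g(y)$ for all $x,y$. *)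

theory Defs
  imports "HOL-Analysis.Analysis"
begin

definition exps :: "nat \<Rightarrow> ('n::finite \<Rightarrow> nat) set" where
  "exps d = {\<alpha>. (\<Sum>i\<in>UNIV. \<alpha> i) = d}"

definition is_form :: "nat \<Rightarrow> (real^'n::finite \<Rightarrow> real) \<Rightarrow> bool" where
  "is_form d f \<longleftrightarrow> (\<exists>c :: ('n \<Rightarrow> nat) \<Rightarrow> real.
      f = (\<lambda>x. \<Sum>\<alpha>\<in>exps d. c \<alpha> * (\<Prod>i\<in>UNIV. (x $ i) ^ \<alpha> i)))"

definition is_norm :: "(real^'n::finite \<Rightarrow> real) \<Rightarrow> bool" where
  "is_norm g \<longleftrightarrow> (\<forall>x. x \<noteq> 0 \<longrightarrow> g x > 0) \<and> g 0 = 0 \<and>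
     (\<forall>l x. g (l *\<^sub>R x) = \<bar>l\<bar> * g x) \<and> (\<forall>x y. g (x + y) \<le> g x + g y)"

definition strictly_convex :: "(real^'n::finite \<Rightarrow> real) \<Rightarrow> bool" where
  "strictly_convex f \<longleftrightarrow> (\<forall>x y l. x \<noteq> y \<longrightarrow> 0 < l \<longrightarrow> l < 1 \<longrightarrow>
      f (l *\<^sub>R x + (1 - l) *\<^sub>R y) < l * f x + (1 - l) * f y)"

end

theory Submission imports Defs "HOL-Computational_Algebra.Polynomial" begin

lemma form_hom:
  fixes f :: "real^'n::finite \<Rightarrow> real"
  assumes "is_form d f" shows "f (t *\<^sub>R x) = t ^ d * f x"
proof -
  obtain c where f: "f = (\<lambda>x. \<Sum>\<alpha>\<in>exps d. c \<alpha> * (\<Prod>i\<in>UNIV. (x $ i) ^ \<alpha> i))"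
    using assms unfolding is_form_def by blast
  have "\<And>\<alpha> :: 'n \<Rightarrow> nat. \<alpha> \<in> exps d \<Longrightarrow> (\<Prod>i\<in>UNIV. ((t *\<^sub>R x) $ i) ^ \<alpha> i) = t ^ d * (\<Prod>i\<in>UNIV. (x $ i) ^ \<alpha> i)"
  proof -
    fix \<alpha> :: "'n \<Rightarrow> nat" assume "\<alpha> \<in> exps d"
    hence s: "(\<Sum>i\<in>UNIV. \<alpha> i) = d" by (simp add: exps_def)
    have "(\<Prod>i\<in>UNIV. ((t *\<^sub>R x) $ i) ^ \<alpha> i) = (\<Prod>i\<in>UNIV. t ^ \<alpha> i * (x $ i) ^ \<alpha> i)"
      by (simp add: power_mult_distrib)
    also have "\<dots> = (\<Prod>i\<in>UNIV. t ^ \<alpha> i) * (\<Prod>i\<in>UNIV. (x $ i) ^ \<alpha> i)"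
      by (simp add: prod.distrib)
    also have "(\<Prod>i\<in>UNIV. t ^ \<alpha> i) = t ^ d" using s by (metis power_sum)
    finally show "?thesis \<alpha>" .
  qed
  thus ?thesis unfolding f by (simp add: sum_distrib_left mult.assoc mult.left_commute)
qed

lemma form_line:
  fixes f :: "real^'n::finite \<Rightarrow> real"
  assumes "is_form d f" shows "\<exists>p. \<forall>t. f (y + t *\<^sub>R v) = poly p t"
proof -
  obtain c where f: "f = (\<lambda>x. \<Sum>\<alpha>\<in>exps d. c \<alpha> * (\<Prod>i\<in>UNIV. (x $ i) ^ \<alpha> i))"
    using assms unfolding is_form_def by blast
  show ?thesis
    by (rule exI[of _ "\<Sum>\<alpha>\<in>exps d. smult (c \<alpha>) (\<Prod>i\<in>UNIV. [:y $ i, v $ i:] ^ \<alpha> i)"])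
       (simp add: f poly_sum poly_prod mult.commute)
qed

lemma norm_conv:
  fixes g :: "real^'n::finite \<Rightarrow> real"
  assumes "is_norm g" "0 \<le> m" "m \<le> 1"
  shows "g (m *\<^sub>R x + (1 - m) *\<^sub>R y) \<le> m * g x + (1 - m) * g y"
proof -
  have "g (m *\<^sub>R x + (1 - m) *\<^sub>R y) \<le> g (m *\<^sub>R x) + g ((1 - m) *\<^sub>R y)"
    using assms(1) unfolding is_norm_def by blast
  also have "\<dots> = m * g x + (1 - m) * g y"
    using assms unfolding is_norm_def by simp
  finally show ?thesis .
qed



lemma form_zero:
  fixes f :: "real^'n::finite \<Rightarrow> real"
  assumes "is_form d f" "d > 0" shows "f 0 = 0"
  using form_hom[OF assms(1), of 0 0] assms(2) by (auto simp: power_0_left)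

lemma form_neg:
  fixes f :: "real^'n::finite \<Rightarrow> real"
  assumes "is_form d f" "even d" shows "f (- x) = f x"
  using form_hom[OF assms(1), of "-1" x] assms(2) by simp

lemma lemA:
  fixes f :: "real^'n::finite \<Rightarrow> real"
  assumes F: "is_form d f" and d: "d > 0" and e: "even d"
  shows "(\<forall>x. f x \<ge> 0) \<and> is_norm (\<lambda>x. root d (f x)) \<Longrightarrow>
         convex_on UNIV f \<and> (\<forall>x. x \<noteq> 0 \<longrightarrow> f x > 0)"
proof -
  assume A: "(\<forall>x. f x \<ge> 0) \<and> is_norm (\<lambda>x. root d (f x))"
  define g where "g = (\<lambda>x. root d (f x))"
  have nn: "\<And>x. f x \<ge> 0" using A by blast
  have N: "is_norm g" using A g_def by simp
  have fg: "\<And>x. f x = g x ^ d" using nn d by (simp add: g_def)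
  have gnn: "\<And>x. g x \<ge> 0" by (simp add: g_def real_root_ge_zero[OF nn])
  have pd: "\<forall>x. x \<noteq> 0 \<longrightarrow> f x > 0"
  proof (intro allI impI)
    fix x :: "real^'n" assume "x \<noteq> 0"
    hence "g x > 0" using N unfolding is_norm_def by blast
    thus "f x > 0" using fg by simp
  qed
  have cv: "convex_on UNIV f"
  proof (rule convex_onI)
    fix t :: real and x y :: "real^'n" assume t: "t > 0" "t < 1"
    have "g ((1 - t) *\<^sub>R x + t *\<^sub>R y) \<le> (1 - t) * g x + (1 - (1 - t)) * g y"
      using norm_conv[OF N, of "1 - t" x y] t by simp
    hence 1: "g ((1 - t) *\<^sub>R x + t *\<^sub>R y) \<le> (1 - t) * g x + t * g y" by simp
    have "f ((1 - t) *\<^sub>R x + t *\<^sub>R y) \<le> ((1 - t) * g x + t * g y) ^ d"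
      unfolding fg by (rule power_mono[OF 1 gnn])
    also have "\<dots> \<le> (1 - t) * g x ^ d + t * g y ^ d"
      using convex_onD[OF convex_power_even[OF e], of t "g x" "g y"] t by simp
    finally show "f ((1 - t) *\<^sub>R x + t *\<^sub>R y) \<le> (1 - t) * f x + t * f y" by (simp add: fg)
  qed simp
  show ?thesis using pd cv by blast
qed

lemma lemB:
  fixes f :: "real^'n::finite \<Rightarrow> real"
  assumes F: "is_form d f" and d: "d > 0" and e: "even d"
  shows "convex_on UNIV f \<and> (\<forall>x. x \<noteq> 0 \<longrightarrow> f x > 0) \<Longrightarrow>
         (\<forall>x. f x \<ge> 0) \<and> is_norm (\<lambda>x. root d (f x))"
proof -
  assume A: "convex_on UNIV f \<and> (\<forall>x. x \<noteq> 0 \<longrightarrow> f x > 0)"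
  have cv: "convex_on UNIV f" and pd: "\<And>x. x \<noteq> 0 \<Longrightarrow> f x > 0" using A by auto
  have f0: "f 0 = 0" by (rule form_zero[OF F d])
  have nn: "\<And>x. f x \<ge> 0" using pd f0 by (metis order_less_imp_le order_refl)
  define g where "g = (\<lambda>x. root d (f x))"
  have fg: "\<And>x. f x = g x ^ d" using nn d by (simp add: g_def)
  have gnn: "\<And>x. g x \<ge> 0" by (simp add: g_def real_root_ge_zero[OF nn])
  have gpos: "\<And>x. x \<noteq> 0 \<Longrightarrow> g x > 0" using pd d by (simp add: g_def)
  have g0: "g 0 = 0" using f0 by (simp add: g_def)
  have ghom: "\<And>l x. g (l *\<^sub>R x) = \<bar>l\<bar> * g x"
  proof -
    fix l :: real and x :: "real^'n"
    have "f (l *\<^sub>R x) = \<bar>l\<bar> ^ d * f x" using form_hom[OF F] e by (simp add: power_even_abs)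
    hence "g (l *\<^sub>R x) = root d (\<bar>l\<bar> ^ d) * g x" by (simp add: g_def real_root_mult)
    thus "g (l *\<^sub>R x) = \<bar>l\<bar> * g x" using d by (simp add: real_root_power_cancel)
  qed
  have tri: "\<And>x y. g (x + y) \<le> g x + g y"
  proof -
    fix x y :: "real^'n"
    show "g (x + y) \<le> g x + g y"
    proof (cases "x = 0 \<or> y = 0")
      case True thus ?thesis using g0 by auto
    next
      case False
      define a where "a = g x"
      define b where "b = g y"
      have a: "a > 0" and b: "b > 0" using False gpos a_def b_def by auto
      have fx: "f ((1/a) *\<^sub>R x) = 1"
        using form_hom[OF F, of "1/a" x] a fg[of x] by (simp add: a_def power_divide)
      have fy: "f ((1/b) *\<^sub>R y) = 1"
        using form_hom[OF F, of "1/b" y] b fg[of y] by (simp add: b_def power_divide)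
      define t where "t = b / (a + b)"
      have t: "0 \<le> t" "t \<le> 1" using a b by (auto simp: t_def)
      have eq: "(1 - t) *\<^sub>R ((1/a) *\<^sub>R x) + t *\<^sub>R ((1/b) *\<^sub>R y) = (1/(a+b)) *\<^sub>R (x + y)"
        using a b by (simp add: t_def field_simps scaleR_add_right)
      have "f ((1/(a+b)) *\<^sub>R (x + y)) \<le> (1 - t) * 1 + t * 1"
        using convex_onD[OF cv t, of "(1/a) *\<^sub>R x" "(1/b) *\<^sub>R y"] fx fy eq by simp
      hence le1: "f ((1/(a+b)) *\<^sub>R (x + y)) \<le> 1" by simp
      have "f (x + y) = (a + b) ^ d * f ((1/(a+b)) *\<^sub>R (x + y))"
        using form_hom[OF F, of "a+b" "(1/(a+b)) *\<^sub>R (x + y)"] a b by simp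
      also have "\<dots> \<le> (a + b) ^ d" using le1 a b
        by (simp add: mult_left_le)
      finally have "f (x + y) \<le> (a + b) ^ d" .
      hence "g (x + y) \<le> root d ((a + b) ^ d)" unfolding g_def using d by simp
      thus ?thesis using a b d by (simp add: real_root_power_cancel a_def b_def)
    qed
  qed
  have "is_norm g" unfolding is_norm_def using gpos g0 ghom tri by blast
  thus ?thesis using nn g_def by simp
qed

lemma lemC:
  fixes f :: "real^'n::finite \<Rightarrow> real"
  assumes F: "is_form d f" and d: "d > 0" and e: "even d"
  shows "convex_on UNIV f \<and> (\<forall>x. x \<noteq> 0 \<longrightarrow> f x > 0) \<Longrightarrow> strictly_convex f"
proof -
  assume A: "convex_on UNIV f \<and> (\<forall>x. x \<noteq> 0 \<longrightarrow> f x > 0)"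
  have cv: "convex_on UNIV f" and pd: "\<And>x. x \<noteq> 0 \<Longrightarrow> f x > 0" using A by auto
  have BB: "(\<forall>x. f x \<ge> 0) \<and> is_norm (\<lambda>x. root d (f x))" using lemB[OF F d e] A by blast
  define g where "g = (\<lambda>x. root d (f x))"
  have nn: "\<And>x. f x \<ge> 0" and N: "is_norm g" using BB g_def by auto
  show "strictly_convex f" unfolding strictly_convex_def
  proof (intro allI impI)
    fix x y :: "real^'n" and l :: real
    assume xy: "x \<noteq> y" and l: "0 < l" "l < 1"
    show "f (l *\<^sub>R x + (1 - l) *\<^sub>R y) < l * f x + (1 - l) * f y"
    proof (rule ccontr)
      assume nlt: "\<not> ?thesis"
      define v where "v = x - y"
      define \<phi> where "\<phi> = (\<lambda>t. f (y + t *\<^sub>R v))"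
      have v0: "v \<noteq> 0" using xy v_def by simp
      have p1: "\<phi> 1 = f x" and p0: "\<phi> 0 = f y" by (simp_all add: \<phi>_def v_def)
      have pl: "\<phi> l = f (l *\<^sub>R x + (1 - l) *\<^sub>R y)"
        by (simp add: \<phi>_def v_def algebra_simps)
      have cphi: "\<phi> ((1 - s) * a + s * b) \<le> (1 - s) * \<phi> a + s * \<phi> b"
        if "0 \<le> s" "s \<le> 1" for s a b
      proof -
        have "y + ((1 - s) * a + s * b) *\<^sub>R v = (1 - s) *\<^sub>R (y + a *\<^sub>R v) + s *\<^sub>R (y + b *\<^sub>R v)"
          by (simp add: algebra_simps)
        thus ?thesis using convex_onD[OF cv that, of "y + a *\<^sub>R v" "y + b *\<^sub>R v"]
          by (simp add: \<phi>_def)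
      qed
      have "\<phi> l \<le> (1 - l) * \<phi> 0 + l * \<phi> 1" using cphi[of l 0 1] l by simp
      hence plq: "\<phi> l = \<phi> 0 + l * (\<phi> 1 - \<phi> 0)" using nlt pl p0 p1 by (simp add: algebra_simps)
      have aff: "\<phi> t = \<phi> 0 + t * (\<phi> 1 - \<phi> 0)" if t: "0 \<le> t" "t \<le> l" for t
      proof (rule antisym)
        show "\<phi> t \<le> \<phi> 0 + t * (\<phi> 1 - \<phi> 0)" using cphi[of t 0 1] t l by (simp add: algebra_simps)
      next
        define s where "s = (l - t) / (1 - t)"
        have tl1: "t < 1" using t l by simp
        have s: "0 \<le> s" "s \<le> 1" using t l tl1 by (auto simp: s_def field_simps)
        have sm: "s * (1 - t) = l - t" using tl1 by (simp add: s_def)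
        have "s - s * t = l - t" using sm by (simp add: algebra_simps)
        moreover have "(1 - s) * t + s * 1 = t - s * t + s" by (simp add: algebra_simps)
        ultimately have ls: "(1 - s) * t + s * 1 = l" by linarith
        have "\<phi> l \<le> (1 - s) * \<phi> t + s * \<phi> 1" using cphi[OF s, of t 1] ls by simp
        moreover have "(1 - s) * (\<phi> 0 + t * (\<phi> 1 - \<phi> 0)) + s * \<phi> 1 = \<phi> 0 + l * (\<phi> 1 - \<phi> 0)"
          unfolding ls[symmetric] by (simp add: algebra_simps)
        ultimately have "(1 - s) * (\<phi> 0 + t * (\<phi> 1 - \<phi> 0)) \<le> (1 - s) * \<phi> t" using plq by linarith
        moreover have "1 - s > 0" using t l tl1 by (simp add: s_def field_simps)
        ultimately show "\<phi> 0 + t * (\<phi> 1 - \<phi> 0) \<le> \<phi> t" by simp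
      qed
      obtain p where p: "\<And>t. \<phi> t = poly p t" using form_line[OF F, of y v] \<phi>_def by auto
      define q where "q = p - [:\<phi> 0, \<phi> 1 - \<phi> 0:]"
      have "{0..l} \<subseteq> {t. poly q t = 0}" using aff p by (auto simp: q_def algebra_simps)
      hence "infinite {t. poly q t = 0}" using l infinite_Icc finite_subset by blast
      hence "q = 0" using poly_roots_finite by blast
      hence pq: "p = [:\<phi> 0, \<phi> 1 - \<phi> 0:]" by (simp add: q_def)
      have all: "\<And>t. \<phi> t = \<phi> 0 + t * (\<phi> 1 - \<phi> 0)"
      proof -
        fix t
        have "poly p t = \<phi> 0 + t * (\<phi> 1 - \<phi> 0)" unfolding pq by (simp add: algebra_simps)
        thus "\<phi> t = \<phi> 0 + t * (\<phi> 1 - \<phi> 0)" using p[of t] by simp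
      qed
      have bz: "\<phi> 1 - \<phi> 0 = 0"
      proof (rule ccontr)
        assume bnz: "\<phi> 1 - \<phi> 0 \<noteq> 0"
        have "\<phi> (- (\<phi> 0 + 1) / (\<phi> 1 - \<phi> 0)) = -1" using all[of "- (\<phi> 0 + 1) / (\<phi> 1 - \<phi> 0)"] bnz
          by simp
        moreover have "\<phi> (- (\<phi> 0 + 1) / (\<phi> 1 - \<phi> 0)) \<ge> 0" using nn by (simp add: \<phi>_def)
        ultimately show False by linarith
      qed
      have fc: "f (y + t *\<^sub>R v) = f y" for t
      proof -
        have "\<phi> t = \<phi> 0" using all[of t] bz by simp
        thus ?thesis by (simp add: \<phi>_def)
      qed
      have const: "\<And>t. g (y + t *\<^sub>R v) = g y" by (simp add: g_def fc)
      define r where "r = g y"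
      have gv: "g v > 0" using N v0 unfolding is_norm_def by blast
      define t where "t = (2 * r + 1) / g v"
      have "g (t *\<^sub>R v) = g ((y + t *\<^sub>R v) + (-1) *\<^sub>R y)" by simp
      also have "\<dots> \<le> g (y + t *\<^sub>R v) + g ((-1) *\<^sub>R y)" using N unfolding is_norm_def by blast
      also have "\<dots> = 2 * r"
      proof -
        have gm: "g ((-1) *\<^sub>R y) = \<bar>-1\<bar> * g y" using N unfolding is_norm_def by blast
        show ?thesis using const[of t] gm by (simp add: r_def)
      qed
      finally have "g (t *\<^sub>R v) \<le> 2 * r" .
      moreover have "g (t *\<^sub>R v) = \<bar>t\<bar> * g v" using N unfolding is_norm_def by blast
      moreover have "r \<ge> 0" by (simp add: r_def g_def real_root_ge_zero[OF nn])
      ultimately show False using gv by (simp add: t_def)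
    qed
  qed
qed

lemma lemD:
  fixes f :: "real^'n::finite \<Rightarrow> real"
  assumes F: "is_form d f" and d: "d > 0" and e: "even d"
  shows "strictly_convex f \<Longrightarrow> convex_on UNIV f \<and> (\<forall>x. x \<noteq> 0 \<longrightarrow> f x > 0)"
proof -
  assume S: "strictly_convex f"
  have h: "\<And>x y l. x \<noteq> y \<Longrightarrow> 0 < l \<Longrightarrow> l < 1 \<Longrightarrow>
      f (l *\<^sub>R x + (1 - l) *\<^sub>R y) < l * f x + (1 - l) * f y"
    using S unfolding strictly_convex_def by blast
  have cv: "convex_on UNIV f"
  proof (rule convex_onI)
    fix t :: real and x y :: "real^'n" assume t: "t > 0" "t < 1"
    show "f ((1 - t) *\<^sub>R x + t *\<^sub>R y) \<le> (1 - t) * f x + t * f y"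
    proof (cases "x = y")
      case True
      have "(1 - t) *\<^sub>R x + t *\<^sub>R x = x" by (simp add: scaleR_left_distrib[symmetric])
      moreover have "(1 - t) * f x + t * f x = f x" by (simp add: algebra_simps)
      ultimately show ?thesis using True by simp
    next
      case False
      have "1 - t > 0" "1 - t < 1" using t by auto
      from h[OF False this] show ?thesis by simp
    qed
  qed simp
  have pd: "\<forall>x. x \<noteq> 0 \<longrightarrow> f x > 0"
  proof (intro allI impI)
    fix x :: "real^'n" assume x: "x \<noteq> 0"
    have "x \<noteq> - x"
    proof
      assume "x = - x"
      hence "x + x = 0" by (metis add.right_inverse)
      hence "(2::real) *\<^sub>R x = 0" by (simp add: scaleR_2)
      thus False using x by simp
    qed
    from h[OF this, of "1/2"]
    have "f ((1/2) *\<^sub>R x + (1/2) *\<^sub>R (- x)) < (1/2) * f x + (1/2) * f (- x)" by simp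
    thus "f x > 0" using form_zero[OF F d] form_neg[OF F e, of x] by simp
  qed
  show ?thesis using cv pd by blast
qed

theorem theorem1:
  fixes f :: "real^'n::finite \<Rightarrow> real" and d :: nat
  assumes "CARD('n) \<ge> 2" and "d > 0" and "even d" and "is_form d f"
  shows "(((\<forall>x. f x \<ge> 0) \<and> is_norm (\<lambda>x. root d (f x)))
           \<longleftrightarrow> (convex_on UNIV f \<and> (\<forall>x. x \<noteq> 0 \<longrightarrow> f x > 0))) \<and>
         ((convex_on UNIV f \<and> (\<forall>x. x \<noteq> 0 \<longrightarrow> f x > 0)) \<longleftrightarrow> strictly_convex f)"
  using lemA[OF assms(4,2,3)] lemB[OF assms(4,2,3)] lemC[OF assms(4,2,3)] lemD[OF assms(4,2,3)]
  by blast

end
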